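(* Let $C \subset \mathbb{R}^n$ be convex and closed with nonempty interior, and let $h\colon C\to\mathbb{R}$ be Legendre on $C$, continuous on $C$, and satisfy condition (B): for every sequence $(x_k)_{k\in\mathbb{N}} \subset \mathrm{int}\, C$ and every $y \in C$, if $x_k \to y$ then $D_h(y,x_k) \to 0$. Let $a \in \mathrm{bd}\, C$ be an extreme point of $C$ and let $y \in C$ with $y \neq a$. Then for any $\epsilon > 0$ and $K > 0$ there exists $c \in \mathrm{int}\, C$ such that $\|c - a\| \le \epsilon$ and $D_h(y,c) \ge K$.
   Context: A convex function $h \colon C \to \mathbb{R}$ on a convex set $C\subset\mathbb{R}^n$ with nonempty interior is called Legendre if (1) $h$ is continuously differentiable on $\mathrm{int}\, C$ and $\|\nabla h(x)\| \to +\infty$ whenever $x \in \mathrm{int}\, C$ approaches a point of the boundary of $C$; and (2) $h$ is strictly convex on $\mathrm{int}\, C$. The Bregman divergence is $D_h(y,x) = h(y) - h(x) - \langle \nabla h(x), y - x\rangle$ for $y \in C$, $x \in \mathrm{int}\, C$. $\mathrm{bd}\, C$ denotes the boundary of $C$. *)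

theory Defs
  imports "HOL-Analysis.Analysis"
begin

definition grad :: "('a::euclidean_space \<Rightarrow> real) \<Rightarrow> 'a \<Rightarrow> 'a" where
  "grad h x = (SOME g. (h has_derivative (\<lambda>v. g \<bullet> v)) (at x))"

definition strictly_convex_on :: "'a::real_vector set \<Rightarrow> ('a \<Rightarrow> real) \<Rightarrow> bool" where
  "strictly_convex_on S f \<longleftrightarrow>
     (\<forall>x\<in>S. \<forall>y\<in>S. \<forall>t::real. x \<noteq> y \<and> 0 < t \<and> t < 1 \<longrightarrow>
        f ((1 - t) *\<^sub>R x + t *\<^sub>R y) < (1 - t) * f x + t * f y)"

definition legendre :: "'a::euclidean_space set \<Rightarrow> ('a \<Rightarrow> real) \<Rightarrow> bool" where
  "legendre C h \<longleftrightarrow>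
     convex C \<and> interior C \<noteq> {} \<and> convex_on C h \<and>
     (\<forall>x\<in>interior C. h differentiable (at x)) \<and>
     continuous_on (interior C) (grad h) \<and>
     (\<forall>b\<in>frontier C. filterlim (\<lambda>x. norm (grad h x)) at_top (at b within interior C)) \<and>
     strictly_convex_on (interior C) h"

definition bregman :: "('a::euclidean_space \<Rightarrow> real) \<Rightarrow> 'a \<Rightarrow> 'a \<Rightarrow> real" where
  "bregman h y x = h y - h x - grad h x \<bullet> (y - x)"

end

theory Submission
  imports Defs
begin

lemma grad_works:
  fixes h :: "'a::euclidean_space \<Rightarrow> real"
  assumes "h differentiable (at x)"
  shows "(h has_derivative (\<lambda>v. grad h x \<bullet> v)) (at x)"
proof -
  obtain D where D: "(h has_derivative D) (at x)" using assms differentiable_def by blast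
  then have lin: "linear D" using has_derivative_linear by blast
  have "D = (\<lambda>v. (\<Sum>i\<in>Basis. D i *\<^sub>R i) \<bullet> v)"
  proof
    fix v :: 'a
    have "D v = D (\<Sum>i\<in>Basis. (v \<bullet> i) *\<^sub>R i)" by (simp add: euclidean_representation)
    also have "\<dots> = (\<Sum>i\<in>Basis. (v \<bullet> i) * D i)"
      using lin by (simp add: linear_sum linear_scale)
    also have "\<dots> = (\<Sum>i\<in>Basis. D i *\<^sub>R i) \<bullet> v"
      by (simp add: inner_sum_right inner_commute mult.commute)
    finally show "D v = (\<Sum>i\<in>Basis. D i *\<^sub>R i) \<bullet> v" .
  qed
  then have "\<exists>g. (h has_derivative (\<lambda>v. g \<bullet> v)) (at x)" using D by metis
  then show ?thesis unfolding grad_def by (rule someI_ex)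
qed

lemma subgrad:
  fixes h :: "'a::euclidean_space \<Rightarrow> real"
  assumes cv: "convex_on C h" and cC: "c \<in> C" and zC: "z \<in> C"
    and der: "(h has_derivative (\<lambda>v. g \<bullet> v)) (at c)"
  shows "h c + g \<bullet> (z - c) \<le> h z"
proof -
  define \<phi> where "\<phi> t = h (c + t *\<^sub>R (z - c))" for t :: real
  have "((\<lambda>t. c + t *\<^sub>R (z - c)) has_derivative (\<lambda>t. t *\<^sub>R (z - c))) (at 0)"
    by (auto intro!: derivative_eq_intros)
  then have "(\<phi> has_derivative (\<lambda>t. g \<bullet> (t *\<^sub>R (z - c)))) (at 0)"
  proof -
    have der': "(h has_derivative (\<lambda>v. g \<bullet> v)) (at (c + 0 *\<^sub>R (z - c)))" using der by simp
    show ?thesis unfolding \<phi>_def using has_derivative_compose[OF \<open>((\<lambda>t. c + t *\<^sub>R (z - c)) has_derivative (\<lambda>t. t *\<^sub>R (z - c))) (at 0)\<close> der'] by simp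
  qed
  then have "(\<phi> has_field_derivative (g \<bullet> (z - c))) (at 0)"
  proof -
    have eq: "(\<lambda>t. g \<bullet> (t *\<^sub>R (z - c))) = (*) (g \<bullet> (z - c))" by (rule ext) simp
    show ?thesis using \<open>(\<phi> has_derivative (\<lambda>t. g \<bullet> (t *\<^sub>R (z - c)))) (at 0)\<close>
      unfolding has_field_derivative_def eq .
  qed
  then have lim: "((\<lambda>t. (\<phi> t - \<phi> 0) / (t - 0)) \<longlongrightarrow> g \<bullet> (z - c)) (at_right 0)"
    using DERIV_def[of \<phi> 0] tendsto_mono at_le by (metis (no_types) has_field_derivative_iff at_within_open open_UNIV UNIV_I filterlim_at_split)
  have ev: "\<forall>\<^sub>F t in at_right 0. (\<phi> t - \<phi> 0) / (t - 0) \<le> h z - h c"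
  proof -
    have "\<forall>\<^sub>F t in at_right (0::real). t < 1" by (auto simp: eventually_at_right_field intro!: exI[of _ 1])
    moreover have "\<forall>\<^sub>F t in at_right (0::real). 0 < t" by (auto simp: eventually_at_right_field intro!: exI[of _ 1])
    ultimately show ?thesis
    proof eventually_elim
      case (elim t)
      have "c + t *\<^sub>R (z - c) = (1 - t) *\<^sub>R c + t *\<^sub>R z" by (simp add: algebra_simps)
      then have "\<phi> t \<le> (1 - t) * h c + t * h z"
        unfolding \<phi>_def using convex_onD[OF cv, of t c z] cC zC elim by simp
      then have "\<phi> t - \<phi> 0 \<le> t * (h z - h c)" by (simp add: \<phi>_def algebra_simps)
      then show ?case using elim by (simp add: divide_simps mult.commute)
    qed
  qed
  have "g \<bullet> (z - c) \<le> h z - h c"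
    by (rule tendsto_upperbound[OF lim ev]) simp
  then show ?thesis by simp
qed

theorem lemma2:
  fixes C :: "'a::euclidean_space set" and h :: "'a \<Rightarrow> real"
    and a y :: 'a and \<epsilon> K :: real
  assumes "convex C" and "closed C" and "interior C \<noteq> {}"
    and "legendre C h"
    and "continuous_on C h"
    and condB: "\<And>xs z. (\<forall>k. xs k \<in> interior C) \<Longrightarrow> z \<in> C \<Longrightarrow> xs \<longlonglongrightarrow> z \<Longrightarrow>
                  (\<lambda>k. bregman h z (xs k)) \<longlonglongrightarrow> 0"
    and "a \<in> frontier C" and "a extreme_point_of C"
    and "y \<in> C" and "y \<noteq> a"
    and "\<epsilon> > 0" and "K > 0"
  shows "\<exists>c\<in>interior C. norm (c - a) \<le> \<epsilon> \<and> bregman h y c \<ge> K"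
proof -
  note cvx = \<open>convex C\<close> and cl = \<open>closed C\<close> and ep = \<open>\<epsilon> > 0\<close>
  have cvh: "convex_on C h" and diff: "\<forall>x\<in>interior C. h differentiable (at x)"
    and blow: "\<forall>b\<in>frontier C. filterlim (\<lambda>x. norm (grad h x)) at_top (at b within interior C)"
    using \<open>legendre C h\<close> unfolding legendre_def by auto
  have aC: "a \<in> C" using \<open>a \<in> frontier C\<close> cl frontier_subset_closed by blast
  define d where "d = a - y"
  have dnz: "norm d > 0" using \<open>y \<noteq> a\<close> by (simp add: d_def)
  define s0 where "s0 = min 1 (\<epsilon> / (4 * norm d))"
  have s0a: "s0 > 0" "s0 \<le> 1" "s0 \<le> \<epsilon> / (4 * norm d)"
    using dnz ep by (auto simp: s0_def)
  have "s0 * norm d \<le> \<epsilon> / (4 * norm d) * norm d"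
    by (rule mult_right_mono) (use s0a in auto)
  then have "s0 * norm d \<le> \<epsilon> / 4" using dnz by simp
  note s0 = s0a(1,2) this
  define p where "p = a + s0 *\<^sub>R d"
  have pC: "p \<notin> C"
  proof
    assume "p \<in> C"
    define u where "u = 1 / (1 + s0)"
    have u: "0 \<le> u" "u \<le> 1" using s0 by (auto simp: u_def)
    have u1: "u * (1 + s0) = 1" using s0 by (simp add: u_def)
    have "(1 - u) *\<^sub>R y + u *\<^sub>R p = (1 - u - u * s0) *\<^sub>R y + (u * (1 + s0)) *\<^sub>R a"
      by (simp add: p_def d_def algebra_simps)
    also have "1 - u - u * s0 = 0" using u1 by (simp add: algebra_simps)
    finally have "(1 - u) *\<^sub>R y + u *\<^sub>R p = a" using u1 by simp
    then have "a \<in> closed_segment y p" unfolding closed_segment_def using u by blast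
    moreover have "a \<noteq> p" using s0 dnz by (auto simp: p_def)
    ultimately have "a \<in> open_segment y p" using \<open>y \<noteq> a\<close> by (auto simp: open_segment_def)
    then show False using \<open>a extreme_point_of C\<close> \<open>y \<in> C\<close> \<open>p \<in> C\<close>
      unfolding extreme_point_of_def by blast
  qed
  obtain \<rho> where \<rho>: "\<rho> > 0" "ball p \<rho> \<subseteq> - C"
    using cl pC open_contains_ball[of "- C"] by (auto simp: open_Compl)
  define \<delta> where "\<delta> = min (\<rho> / (1 + s0)) (\<epsilon> / 4)"
  have \<delta>a: "\<delta> > 0" "\<delta> \<le> \<rho> / (1 + s0)" "\<delta> \<le> \<epsilon> / 4"
    unfolding \<delta>_def using \<rho> s0(1) ep by (simp_all only: min.bounded_iff min_le_iff_disj) auto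
  have "\<delta> * (1 + s0) \<le> \<rho> / (1 + s0) * (1 + s0)"
    by (rule mult_right_mono) (use \<delta>a s0 in auto)
  then have "\<delta> * (1 + s0) \<le> \<rho>" using s0 by simp
  note \<delta> = \<delta>a(1) this \<delta>a(3)
  have "a \<in> closure (interior C)" using convex_closure_interior[OF cvx \<open>interior C \<noteq> {}\<close>] aC
    closure_subset by auto
  then obtain c0 where c0: "c0 \<in> interior C" "dist c0 a < \<delta>"
    using \<delta> closure_approachable by blast
  define p' where "p' = c0 + s0 *\<^sub>R (c0 - y)"
  have "p' - p = (1 + s0) *\<^sub>R (c0 - a)" by (simp add: p'_def p_def d_def algebra_simps)
  then have "dist p' p = (1 + s0) * dist c0 a" using s0 by (simp add: dist_norm)
  also have "\<dots> < \<rho>" using c0 \<delta> s0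
    by (smt (verit, ccfv_threshold) mult_strict_left_mono mult.commute)
  finally have "p' \<in> ball p \<rho>" by (simp add: dist_commute)
  then have p'C: "p' \<notin> C" using \<rho> by blast
  obtain r1 where r1: "r1 > 0" "cball c0 r1 \<subseteq> C" using c0 mem_interior_cball by blast
  define r0 where "r0 = min r1 (\<epsilon> / 4)"
  have r0: "r0 > 0" "cball c0 r0 \<subseteq> C" "r0 \<le> \<epsilon> / 4"
    using r1 ep by (auto simp: r0_def)
  have "closed_segment c0 p' \<inter> frontier C \<noteq> {}"
    apply (rule connected_Int_frontier)
    using c0 interior_subset p'C by auto
  then obtain b where b: "b \<in> closed_segment c0 p'" "b \<in> frontier C" by blast
  then obtain \<mu> where \<mu>: "0 \<le> \<mu>" "\<mu> \<le> 1" "b = (1 - \<mu>) *\<^sub>R c0 + \<mu> *\<^sub>R p'"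
    unfolding closed_segment_def by blast
  have bC: "b \<in> C" using b cl frontier_subset_closed by blast
  have bc0: "b \<noteq> c0" using b c0 by (auto simp: frontier_def)
  have bdef: "b - c0 = (\<mu> * s0) *\<^sub>R (c0 - y)" using \<mu> by (simp add: p'_def algebra_simps)
  have \<mu>pos: "\<mu> > 0"
  proof (rule ccontr)
    assume "\<not> \<mu> > 0" then have "\<mu> = 0" using \<mu> by simp
    then show False using \<mu>(3) bc0 by simp
  qed
  have "compact (h ` (C \<inter> cball a \<epsilon>))"
    by (rule compact_continuous_image) (auto intro: continuous_on_subset[OF \<open>continuous_on C h\<close>]
        compact_Int_closed cl)
  then obtain B where B: "\<And>x. x \<in> C \<Longrightarrow> x \<in> cball a \<epsilon> \<Longrightarrow> \<bar>h x\<bar> \<le> B"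
    using compact_imp_bounded bounded_real by (metis IntI image_eqI)
  define N where "N = (K + 3 * B + \<bar>h y\<bar>) / r0 + 1"
  have "\<forall>\<^sub>F x in at b within interior C. N \<le> norm (grad h x)"
    using blow b(2) unfolding filterlim_at_top by blast
  then obtain \<eta> where \<eta>: "\<eta> > 0" "\<And>x. x \<in> interior C \<Longrightarrow> x \<noteq> b \<Longrightarrow> dist x b < \<eta> \<Longrightarrow> N \<le> norm (grad h x)"
    unfolding eventually_at by blast
  have nb: "norm (c0 - b) > 0" using bc0 by simp
  define \<theta> where "\<theta> = min (1/2) (\<eta> / (2 * norm (c0 - b)))"
  have \<theta>a: "\<theta> > 0" "\<theta> \<le> 1/2" "\<theta> \<le> \<eta> / (2 * norm (c0 - b))"
    unfolding \<theta>_def using \<eta>(1) nb by (simp_all only: min.bounded_iff min_le_iff_disj) auto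
  have "\<theta> * norm (c0 - b) \<le> \<eta> / (2 * norm (c0 - b)) * norm (c0 - b)"
    by (rule mult_right_mono) (use \<theta>a in auto)
  then have "\<theta> * norm (c0 - b) < \<eta>" using nb \<eta>(1) by simp
  note \<theta> = \<theta>a(1,2) this
  define c where "c = b - \<theta> *\<^sub>R (b - c0)"
  have cint: "c \<in> interior C" unfolding c_def
    by (rule mem_interior_closure_convex_shrink[OF cvx c0(1)]) (use bC closure_subset \<theta> in auto)
  have cb: "c \<noteq> b" "dist c b < \<eta>"
    using \<theta> bc0 nb by (auto simp: c_def dist_norm norm_minus_commute)
  define g where "g = grad h c"
  have gN: "N \<le> norm g" using \<eta>(2)[OF cint cb] by (simp add: g_def)
  have gder: "(h has_derivative (\<lambda>v. g \<bullet> v)) (at c)"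
    unfolding g_def by (rule grad_works) (use diff cint in auto)
  define \<tau> where "\<tau> = (1 - \<theta>) * \<mu> * s0"
  have \<tau>: "\<tau> > 0" "\<tau> \<le> 1" using \<theta> \<mu> \<mu>pos s0 by (auto simp: \<tau>_def mult_le_one)
  have cc0: "c - c0 = \<tau> *\<^sub>R (c0 - y)"
  proof -
    have "c - c0 = (1 - \<theta>) *\<^sub>R (b - c0)" by (simp add: c_def algebra_simps)
    then show ?thesis by (simp add: bdef \<tau>_def)
  qed
  have cy: "c - y = (1 + \<tau>) *\<^sub>R (c0 - y)"
    using cc0 by (simp add: algebra_simps)
  have "norm (c - c0) = \<tau> * norm (c0 - y)" using cc0 \<tau> by simp
  also have "\<dots> \<le> s0 * norm (c0 - y)" 
  proof -
    have "(1 - \<theta>) * \<mu> \<le> 1" using \<theta> \<mu> by (intro mult_le_one) auto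
    then have "\<tau> \<le> s0" unfolding \<tau>_def using s0 by (simp add: mult_left_le_one_le)
    then show ?thesis by (rule mult_right_mono) simp
  qed
  also have "\<dots> \<le> s0 * (norm d + norm (c0 - a))"
    using s0 norm_triangle_ineq[of "c0 - a" "a - y"] by (intro mult_left_mono) (auto simp: d_def)
  also have "\<dots> \<le> \<epsilon> / 4 + \<delta>"
  proof -
    have nc0a: "norm (c0 - a) \<le> \<delta>" using c0 by (simp add: dist_norm)
    have "s0 * norm (c0 - a) \<le> norm (c0 - a)" using s0 by (simp add: mult_left_le_one_le)
    then show ?thesis using s0 nc0a by (simp add: distrib_left)
  qed
  finally have ncc0: "norm (c - c0) \<le> \<epsilon>/4 + \<delta>" .
  have nc0a: "norm (c0 - a) \<le> \<delta>" using c0 by (simp add: dist_norm)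
  have nca: "norm (c - a) \<le> \<epsilon>"
    using norm_triangle_ineq[of "c - c0" "c0 - a"] ncc0 nc0a \<delta> by simp
  have Bnn: "B \<ge> 0" using B[OF aC] ep by fastforce
  have "(K + 3 * B + \<bar>h y\<bar>) / r0 \<ge> 0" using Bnn \<open>K > 0\<close> r0 by simp
  then have "N > 0" unfolding N_def by linarith
  then have gpos: "norm g > 0" using gN by linarith
  define z where "z = c0 + (r0 / norm g) *\<^sub>R g"
  have zc: "z \<in> cball c0 r0" using gpos r0 by (simp add: z_def dist_norm)
  then have zC: "z \<in> C" using r0 by blast
  have za: "norm (z - a) \<le> \<epsilon>"
    using zc nc0a \<delta> r0 norm_triangle_ineq[of "z - c0" "c0 - a"] by (simp add: dist_norm norm_minus_commute)
  have sg: "h c + g \<bullet> (z - c) \<le> h z"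
    by (rule subgrad[OF cvh _ zC gder]) (use cint interior_subset in auto)
  have "g \<bullet> (z - c) = g \<bullet> (c0 - c) + r0 * norm g"
    using gpos by (simp add: z_def inner_diff_right inner_add_right dot_square_norm power2_eq_square)
  then have key: "g \<bullet> (c - c0) \<ge> r0 * norm g + h c - h z"
    using sg by (simp add: inner_diff_right)
  have hc: "\<bar>h c\<bar> \<le> B" using B[of c] cint interior_subset[of C] nca by (auto simp: dist_norm norm_minus_commute)
  have hz: "\<bar>h z\<bar> \<le> B" using B zC za by (auto simp: dist_norm norm_minus_commute)
  have big: "r0 * norm g \<ge> K + 3 * B + \<bar>h y\<bar>"
  proof -
    have "r0 * N = K + 3 * B + \<bar>h y\<bar> + r0" using r0 by (simp add: N_def field_simps)
    moreover have "r0 * N \<le> r0 * norm g" using gN r0 by simp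
    ultimately show ?thesis using r0 by linarith
  qed
  have gc0: "g \<bullet> (c - c0) \<ge> 0" using key big hc hz Bnn \<open>K > 0\<close> by linarith
  have "g \<bullet> (c - c0) = \<tau> * (g \<bullet> (c0 - y))" using cc0 by simp
  then have gc0y: "g \<bullet> (c0 - y) \<ge> 0" using gc0 \<tau> by (simp add: zero_le_mult_iff)
  have "g \<bullet> (c - y) = g \<bullet> (c - c0) + g \<bullet> (c0 - y)" by (simp add: inner_diff_right)
  then have gcy: "g \<bullet> (c - y) \<ge> g \<bullet> (c - c0)" using gc0y by simp
  have "bregman h y c = h y - h c + g \<bullet> (c - y)"
    by (simp add: bregman_def g_def inner_diff_right)
  also have "\<dots> \<ge> K" using gcy key big hc hz by linarith
  finally show ?thesis using cint nca by blast
qed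

end
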